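(* Let $G\cong\mathbb{R}^{d_1}\times\mathbb{R}^{d_2}$ be a 2-step stratified group with sub-Laplacian $\mathcal{L}$, with $\Omega$, $\phi$, $\phi_*$, $\mathfrak{l}_{\mathbf{y}}$, $\bar{\mathfrak{l}}_{\mathbf{y}}$ and $\Xi$ as defined below. For all $t\in\mathbb{R}$ and $(\mathbf{x},\mathbf{y},\boldsymbol{\xi})$ with $\mathbf{x}\in G$ and $(\mathbf{y},\boldsymbol{\xi})\in\Xi$, \[ \phi_*(t,\mathbf{x},\mathbf{y},\boldsymbol{\xi})=\phi(t,\mathfrak{l}_{\mathbf{y}}^{-1}\mathbf{x},\bar{\mathfrak{l}}_{\mathbf{y}}^{-1}\boldsymbol{\xi}). \]
   Context: $G$ is a 2-step stratified Lie group identified via exponential coordinates with $\mathbb{R}^{d_1}_x\times\mathbb{R}^{d_2}_u$, group law $(y,v)\cdot(x,u)=(y+x,v+u+[y,x]/2)$, coordinates on $\mathfrak{g}_1$ orthonormal for the inner product $\langle\cdot,\cdot\rangle$ making the vector fields $X_j$ of $\mathcal{L}=-\sum X_j^2$ orthonormal; $\mathbf{x}=(x,u)$, $\boldsymbol{\xi}=(\xi,\mu)$. $J_\mu$ is the skew-symmetric matrix with $\langle J_\mu x,x'\rangle=\mu\cdot[x,x']$, $|J_\mu|=(-J_\mu^2)^{1/2}$, and $\Omega$ is the set of $\mu$ where $\operatorname{rk}J_\mu$ is maximal. $\mathcal{H}(\mathbf{x},\boldsymbol{\xi})=|\xi+J_\mu x/2|$; for $(\mathbf{y},\boldsymbol{\xi})$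 with $\xi+J_\mu y/2\neq0$, $t\mapsto(\mathbf{x}_*^t(\mathbf{y},\boldsymbol{\xi}),\boldsymbol{\xi}_*^t(\mathbf{y},\boldsymbol{\xi}))$ is the solution of $\dot{\mathbf{x}}=\nabla_{\boldsymbol{\xi}}\mathcal{H}$, $\dot{\boldsymbol{\xi}}=-\nabla_{\mathbf{x}}\mathcal{H}$ with initial datum $(\mathbf{y},\boldsymbol{\xi})$, and $\mathbf{x}^t(\boldsymbol{\xi})=\mathbf{x}_*^t(0,\boldsymbol{\xi})$, $\boldsymbol{\xi}^t(\boldsymbol{\xi})=\boldsymbol{\xi}_*^t(0,\boldsymbol{\xi})$. Define $\phi(t,\mathbf{x},\boldsymbol{\xi})=(\mathbf{x}-\mathbf{x}^t(\boldsymbol{\xi}))\cdot\boldsymbol{\xi}^t(\boldsymbol{\xi})+\frac{i}{4}\langle|J_\mu|(x-x^t(\boldsymbol{\xi})),x-x^t(\boldsymbol{\xi})\rangle$ and $\phi_*(t,\mathbf{x},\mathbf{y},\boldsymbol{\xi})=(\mathbf{x}-\mathbf{x}_*^t(\mathbf{y},\boldsymbol{\xi}))\cdot\boldsymbol{\xi}_*^t(\mathbf{y},\boldsymbol{\xi})+\frac{i}{4}\langle|J_\mu|(x-x_*^t(\mathbf{y},\boldsymbol{\xi})),x-x_*^t(\mathbf{y},\boldsymbol{\xi})\rangle$ (where $x^t$, $x_*^t$ are first-layer components). $\mathfrak{l}_{\mathbf{y}}(\mathbf{x})=\mathbf{y}\cdot\mathbf{x}$ is left translation, and $\bar{\mathfrak{l}}_{\mathbf{y}}(\xi,\mu)=(\xi-J_\mu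 y/2,\mu)$ for $\mathbf{y}=(y,v)$. $\Xi_{\mathbf{y}}=\bar{\mathfrak{l}}_{\mathbf{y}}((\mathbb{R}^{d_1}\setminus\{0\})\times\Omega)$ and $\Xi=\bigcup_{\mathbf{y}\in G}\{\mathbf{y}\}\times\Xi_{\mathbf{y}}$. *)

theory Defs
  imports "HOL-Analysis.Analysis"
begin

text \<open>2-step stratified group on R^d1 x R^d2 (types real^'n, real^'m) with skew bilinear
  bracket B (the Lie bracket restricted to the first layer).\<close>

definition gmult :: "(real^'n \<Rightarrow> real^'n \<Rightarrow> real^'m) \<Rightarrow>
    ((real^'n) \<times> (real^'m)) \<Rightarrow> ((real^'n) \<times> (real^'m)) \<Rightarrow> ((real^'n) \<times> (real^'m))" where
  "gmult B p q = (fst p + fst q, snd p + snd q + (1/2) *\<^sub>R B (fst p) (fst q))"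

definition lmap :: "(real^'n \<Rightarrow> real^'n \<Rightarrow> real^'m) \<Rightarrow>
    ((real^'n) \<times> (real^'m)) \<Rightarrow> ((real^'n) \<times> (real^'m)) \<Rightarrow> ((real^'n) \<times> (real^'m))" where
  "lmap B y = gmult B y"

text \<open>J_mu, characterised by <J_mu x, x'> = mu . [x, x']\<close>
definition Jmap :: "(real^'n \<Rightarrow> real^'n \<Rightarrow> real^'m) \<Rightarrow> real^'m \<Rightarrow> real^'n \<Rightarrow> real^'n" where
  "Jmap B \<mu> x = (\<chi> i. \<mu> \<bullet> B x (axis i 1))"

definition absJ :: "(real^'n \<Rightarrow> real^'n \<Rightarrow> real^'m) \<Rightarrow> real^'m \<Rightarrow> real^'n \<Rightarrow> real^'n" where
  "absJ B \<mu> = (THE S. linear S \<and> (\<forall>x y. S x \<bullet> y = x \<bullet> S y) \<and> (\<forall>x. 0 \<le> S x \<bullet> x)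
       \<and> (\<forall>x. S (S x) = - Jmap B \<mu> (Jmap B \<mu> x)))"

definition Omega :: "(real^'n \<Rightarrow> real^'n \<Rightarrow> real^'m) \<Rightarrow> (real^'m) set" where
  "Omega B = {\<mu>. \<forall>\<nu>. dim (range (Jmap B \<nu>)) \<le> dim (range (Jmap B \<mu>))}"

definition barl :: "(real^'n \<Rightarrow> real^'n \<Rightarrow> real^'m) \<Rightarrow>
    ((real^'n) \<times> (real^'m)) \<Rightarrow> ((real^'n) \<times> (real^'m)) \<Rightarrow> ((real^'n) \<times> (real^'m))" where
  "barl B y \<xi> = (fst \<xi> - (1/2) *\<^sub>R Jmap B (snd \<xi>) (fst y), snd \<xi>)"

definition Xi :: "(real^'n \<Rightarrow> real^'n \<Rightarrow> real^'m) \<Rightarrow>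
    (((real^'n) \<times> (real^'m)) \<times> ((real^'n) \<times> (real^'m))) set" where
  "Xi B = {(y, \<xi>). \<xi> \<in> barl B y ` ((UNIV - {0}) \<times> Omega B)}"

definition grad :: "('a::real_inner \<Rightarrow> real) \<Rightarrow> 'a \<Rightarrow> 'a" where
  "grad f p = (THE g. (f has_derivative (\<lambda>h. g \<bullet> h)) (at p))"

definition ham_flow :: "('a::real_inner \<times> 'a \<Rightarrow> real) \<Rightarrow> 'a \<Rightarrow> 'a \<Rightarrow> real \<Rightarrow> 'a \<times> 'a" where
  "ham_flow H y \<xi> = (THE \<gamma>. \<gamma> 0 = (y, \<xi>) \<and>
     (\<forall>t. (\<gamma> has_vector_derivative
        (grad (\<lambda>\<eta>. H (fst (\<gamma> t), \<eta>)) (snd (\<gamma> t)),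
         - grad (\<lambda>z. H (z, snd (\<gamma> t))) (fst (\<gamma> t)))) (at t)))"

definition HamG :: "(real^'n \<Rightarrow> real^'n \<Rightarrow> real^'m) \<Rightarrow>
    ((real^'n) \<times> (real^'m)) \<times> ((real^'n) \<times> (real^'m)) \<Rightarrow> real" where
  "HamG B z = norm (fst (snd z) + (1/2) *\<^sub>R Jmap B (snd (snd z)) (fst (fst z)))"

definition xstar where "xstar B t y \<xi> = fst (ham_flow (HamG B) y \<xi> t)"
definition xistar where "xistar B t y \<xi> = snd (ham_flow (HamG B) y \<xi> t)"

definition phistar :: "(real^'n \<Rightarrow> real^'n \<Rightarrow> real^'m) \<Rightarrow> real \<Rightarrow>
    ((real^'n) \<times> (real^'m)) \<Rightarrow> ((real^'n) \<times> (real^'m)) \<Rightarrow> ((real^'n) \<times> (real^'m)) \<Rightarrow> complex" where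
  "phistar B t x y \<xi> =
     complex_of_real ((x - xstar B t y \<xi>) \<bullet> xistar B t y \<xi>)
     + (\<i> / 4) * complex_of_real
         (absJ B (snd \<xi>) (fst x - fst (xstar B t y \<xi>)) \<bullet> (fst x - fst (xstar B t y \<xi>)))"

text \<open>x^t(xi) = x_*^t(0, xi), xi^t(xi) = xi_*^t(0, xi)\<close>
definition phi :: "(real^'n \<Rightarrow> real^'n \<Rightarrow> real^'m) \<Rightarrow> real \<Rightarrow>
    ((real^'n) \<times> (real^'m)) \<Rightarrow> ((real^'n) \<times> (real^'m)) \<Rightarrow> complex" where
  "phi B t x \<xi> =
     complex_of_real ((x - xstar B t 0 \<xi>) \<bullet> xistar B t 0 \<xi>)
     + (\<i> / 4) * complex_of_real
         (absJ B (snd \<xi>) (fst x - fst (xstar B t 0 \<xi>)) \<bullet> (fst x - fst (xstar B t 0 \<xi>)))"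

end

theory Submission
  imports Defs
begin


typedef (overloaded) 'a endo = "UNIV :: ('a::real_normed_vector \<Rightarrow>\<^sub>L 'a) set"
  morphisms Rep_endo Abs_endo by auto

setup_lifting type_definition_endo

instantiation endo :: (real_normed_vector) real_normed_vector
begin
lift_definition norm_endo :: "'a endo \<Rightarrow> real" is norm .
lift_definition minus_endo :: "'a endo \<Rightarrow> 'a endo \<Rightarrow> 'a endo" is "(-)" .
lift_definition uminus_endo :: "'a endo \<Rightarrow> 'a endo" is uminus .
lift_definition zero_endo :: "'a endo" is 0 .
lift_definition plus_endo :: "'a endo \<Rightarrow> 'a endo \<Rightarrow> 'a endo" is "(+)" .
lift_definition scaleR_endo :: "real \<Rightarrow> 'a endo \<Rightarrow> 'a endo" is scaleR .
definition dist_endo :: "'a endo \<Rightarrow> 'a endo \<Rightarrow> real" where "dist_endo a b = norm (a - b)"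
definition uniformity_endo :: "('a endo \<times> 'a endo) filter"
  where "uniformity_endo = (INF e\<in>{0 <..}. principal {(x, y). dist x y < e})"
definition open_endo :: "'a endo set \<Rightarrow> bool"
  where "open_endo S = (\<forall>x\<in>S. \<forall>\<^sub>F (x', y) in uniformity. x' = x \<longrightarrow> y \<in> S)"
definition sgn_endo :: "'a endo \<Rightarrow> 'a endo" where "sgn_endo x = scaleR (inverse (norm x)) x"
instance
  apply standard
  unfolding dist_endo_def open_endo_def sgn_endo_def uniformity_endo_def
  apply (rule refl | (transfer, force simp: norm_triangle_ineq algebra_simps))+
  done
end

instantiation endo :: (real_normed_vector) real_normed_algebra
begin
lift_definition times_endo :: "'a endo \<Rightarrow> 'a endo \<Rightarrow> 'a endo" is "(o\<^sub>L)" .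
instance
  apply standard
  apply (transfer, rule blinfun_eqI, simp add: blinfun.bilinear_simps)+
  apply (transfer, rule norm_blinfun_compose)
  done
end

instantiation endo :: ("{real_normed_vector,perfect_space}") real_normed_algebra_1
begin
lift_definition one_endo :: "'a endo" is id_blinfun .
instance
  apply standard
  subgoal by (transfer, rule blinfun_eqI, simp)
  subgoal by (transfer, rule blinfun_eqI, simp)
  subgoal by (metis norm_zero zero_neq_one one_endo.rep_eq norm_endo.rep_eq norm_blinfun_id)
  subgoal by (metis one_endo.rep_eq norm_endo.rep_eq norm_blinfun_id)
  done
end

lemma Cauchy_Rep_endo: "Cauchy X \<Longrightarrow> Cauchy (\<lambda>n. Rep_endo (X n))"
  unfolding Cauchy_def dist_norm
  by (metis minus_endo.rep_eq norm_endo.rep_eq)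

instance endo :: (banach) banach
proof
  fix X :: "nat \<Rightarrow> 'a endo"
  assume "Cauchy X"
  then have "convergent (\<lambda>n. Rep_endo (X n))" using Cauchy_Rep_endo Cauchy_convergent by blast
  then obtain L where L: "(\<lambda>n. Rep_endo (X n)) \<longlonglongrightarrow> L" unfolding convergent_def by blast
  have "X \<longlonglongrightarrow> Abs_endo L"
    using L unfolding tendsto_iff dist_norm
    by (simp add: minus_endo.rep_eq norm_endo.rep_eq Abs_endo_inverse)
  then show "convergent X" unfolding convergent_def by blast
qed



lemma grad_eqI:
  fixes f :: "'a::real_inner \<Rightarrow> real"
  assumes "(f has_derivative (\<lambda>h. g \<bullet> h)) (at p)"
  shows "grad f p = g"
  unfolding grad_def
proof (rule the_equality)
  show "(f has_derivative (\<lambda>h. g \<bullet> h)) (at p)" by fact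
  fix g' assume "(f has_derivative (\<lambda>h. g' \<bullet> h)) (at p)"
  then have "(\<lambda>h. g' \<bullet> h) = (\<lambda>h. g \<bullet> h)" using assms has_derivative_unique by blast
  then have "(g' - g) \<bullet> (g' - g) = 0" by (metis inner_diff_left cancel_comm_monoid_add_class.diff_cancel)
  then show "g' = g" by simp
qed

definition wv :: "(real^'n \<Rightarrow> real^'n \<Rightarrow> real^'m) \<Rightarrow> ((real^'n) \<times> (real^'m)) \<times> ((real^'n) \<times> (real^'m)) \<Rightarrow> real^'n" where
  "wv B p = fst (snd p) + (1/2) *\<^sub>R Jmap B (snd (snd p)) (fst (fst p))"

lemma HamG_wv: "HamG B p = norm (wv B p)" by (simp add: HamG_def wv_def)

definition Fv :: "(real^'n \<Rightarrow> real^'n \<Rightarrow> real^'m) \<Rightarrow> ((real^'n) \<times> (real^'m)) \<times> ((real^'n) \<times> (real^'m)) \<Rightarrow> ((real^'n) \<times> (real^'m)) \<times> ((real^'n) \<times> (real^'m))" where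
  "Fv B p = (grad (\<lambda>\<eta>. HamG B (fst p, \<eta>)) (snd p), - grad (\<lambda>z. HamG B (z, snd p)) (fst p))"

locale grp =
  fixes B :: "real^'n \<Rightarrow> real^'n \<Rightarrow> real^'m"
  assumes bil: "bilinear B" and sk: "\<forall>a b. B a b = - B b a"
begin

lemma B_lin1: "linear (\<lambda>x. B x y)" using bil by (simp add: bilinear_def)
lemma B_lin2: "linear (B x)" using bil by (simp add: bilinear_def)
lemma B_bb: "bounded_bilinear B" using bil bilinear_conv_bounded_bilinear by blast
lemma B_same: "B a a = 0"
proof -
  have "B a a = - B a a" using sk by blast
  then have "B a a + B a a = 0" using eq_neg_iff_add_eq_0 by blast
  then have "2 *\<^sub>R B a a = 0" by (simp add: scaleR_2)
  then show ?thesis by simp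
qed

lemma J_inner: "Jmap B \<mu> x \<bullet> z = \<mu> \<bullet> B x z"
proof -
  have "B x z = B x (\<Sum>i\<in>UNIV. z$i *\<^sub>R axis i 1)"
    using basis_expansion[of z] by (simp add: scalar_mult_eq_scaleR)
  also have "\<dots> = (\<Sum>i\<in>UNIV. z$i *\<^sub>R B x (axis i 1))"
    using B_lin2[of x] by (simp add: linear_sum linear_scale)
  finally have "\<mu> \<bullet> B x z = (\<Sum>i\<in>UNIV. z$i * (\<mu> \<bullet> B x (axis i 1)))"
    by (simp add: inner_sum_right)
  then show ?thesis by (simp add: Jmap_def inner_vec_def mult.commute)
qed

lemma J_add_mu: "Jmap B (a + b) x = Jmap B a x + Jmap B b x"
  by (simp add: Jmap_def vec_eq_iff inner_add_left)
lemma J_scale_mu: "Jmap B (c *\<^sub>R a) x = c *\<^sub>R Jmap B a x"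
  by (simp add: Jmap_def vec_eq_iff)
lemma J_add_x: "Jmap B a (x + y) = Jmap B a x + Jmap B a y"
  by (simp add: Jmap_def vec_eq_iff bounded_bilinear.add_left[OF B_bb] inner_add_right)
lemma J_scale_x: "Jmap B a (c *\<^sub>R x) = c *\<^sub>R Jmap B a x"
  by (simp add: Jmap_def vec_eq_iff bounded_bilinear.scaleR_left[OF B_bb])
lemma J_zero_mu[simp]: "Jmap B 0 x = 0"
  by (simp add: Jmap_def vec_eq_iff)
lemma J_zero_x[simp]: "Jmap B a 0 = 0"
  using J_scale_x[of a 0 0] by simp
lemma J_diff_x: "Jmap B a (x - y) = Jmap B a x - Jmap B a y"
  using J_add_x[of a "x - y" y] by simp
lemma J_minus_x: "Jmap B a (- y) = - Jmap B a y"
  using J_diff_x[of a 0 y] by simp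
lemma J_linear: "linear (Jmap B a)"
  by (rule linearI) (simp_all add: J_add_x J_scale_x)
lemma J_linear_mu: "linear (\<lambda>a. Jmap B a x)"
  by (rule linearI) (simp_all add: J_add_mu J_scale_mu)
lemma J_bb: "bounded_bilinear (\<lambda>a x. Jmap B a x)"
proof -
  have "bilinear (\<lambda>a x. Jmap B a x)" unfolding bilinear_def
    using J_linear J_linear_mu by simp
  then show ?thesis using bilinear_conv_bounded_bilinear by blast
qed
lemma J_skew: "Jmap B \<mu> x \<bullet> z = - (Jmap B \<mu> z \<bullet> x)"
  using sk[rule_format, of x z] by (simp add: J_inner)
lemma J_self: "Jmap B \<mu> x \<bullet> x = 0"
  using J_skew[of \<mu> x x] by simp


lemma grad_eta:
  fixes x \<eta> :: "(real^'n) \<times> (real^'m)"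
  assumes Wd: "W = fst \<eta> + (1/2) *\<^sub>R Jmap B (snd \<eta>) (fst x)" and W0: "W \<noteq> 0"
  shows "grad (\<lambda>\<eta>. HamG B (x, \<eta>)) \<eta> = ((1/norm W) *\<^sub>R W, (1/(2*norm W)) *\<^sub>R B (fst x) W)"
proof -
  define L where "L = (\<lambda>\<eta>'::(real^'n) \<times> (real^'m). fst \<eta>' + (1/2) *\<^sub>R Jmap B (snd \<eta>') (fst x))"
  have lin: "linear L" unfolding L_def
    by (rule linearI) (simp_all add: J_add_mu J_scale_mu algebra_simps)
  have dL: "(L has_derivative L) (at \<eta>)" by (rule linear_imp_has_derivative[OF lin])
  have LW: "L \<eta> = W" using Wd L_def by simp
  have dn: "(norm has_derivative (\<lambda>h. h \<bullet> sgn W)) (at (L \<eta>))" using has_derivative_norm[OF W0] LW by simp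
  have d: "((\<lambda>\<eta>'. norm (L \<eta>')) has_derivative (\<lambda>h. L h \<bullet> sgn W)) (at \<eta>)"
    using has_derivative_compose[OF dL dn] .
  have e1: "(\<lambda>\<eta>'. norm (L \<eta>')) = (\<lambda>\<eta>'. HamG B (x, \<eta>'))"
    by (simp add: L_def HamG_def)
  have e2: "(\<lambda>h. L h \<bullet> sgn W) = (\<lambda>h. ((1/norm W) *\<^sub>R W, (1/(2*norm W)) *\<^sub>R B (fst x) W) \<bullet> h)"
  proof
    fix h :: "(real^'n) \<times> (real^'m)"
    have j: "W \<bullet> Jmap B (snd h) (fst x) = snd h \<bullet> B (fst x) W" using J_inner[of "snd h" "fst x" W] by (simp add: inner_commute)
      show "L h \<bullet> sgn W = ((1/norm W) *\<^sub>R W, (1/(2*norm W)) *\<^sub>R B (fst x) W) \<bullet> h"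
      using W0 j by (simp add: L_def sgn_div_norm inner_prod_def inner_add_left inner_add_right inner_commute field_simps)
  qed
  show ?thesis by (rule grad_eqI) (use d e1 e2 in simp)
qed

lemma grad_z:
  fixes z \<xi> :: "(real^'n) \<times> (real^'m)"
  assumes Wd: "W = fst \<xi> + (1/2) *\<^sub>R Jmap B (snd \<xi>) (fst z)" and W0: "W \<noteq> 0"
  shows "grad (\<lambda>z. HamG B (z, \<xi>)) z = (- (1/(2*norm W)) *\<^sub>R Jmap B (snd \<xi>) W, 0)"
proof -
  define M where "M = (\<lambda>z'::(real^'n) \<times> (real^'m). (1/2) *\<^sub>R Jmap B (snd \<xi>) (fst z'))"
  have lin: "linear M" unfolding M_def
    by (rule linearI) (simp_all add: J_add_x J_scale_x algebra_simps)
  have dM: "((\<lambda>z'. fst \<xi> + M z') has_derivative M) (at z)"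
    using linear_imp_has_derivative[OF lin] by (auto intro!: derivative_eq_intros)
  have LW: "fst \<xi> + M z = W" using Wd M_def by simp
  have dn: "(norm has_derivative (\<lambda>h. h \<bullet> sgn W)) (at (fst \<xi> + M z))" using has_derivative_norm[OF W0] LW by simp
  have d: "((\<lambda>z'. norm (fst \<xi> + M z')) has_derivative (\<lambda>h. M h \<bullet> sgn W)) (at z)"
    using has_derivative_compose[OF dM dn] .
  have e1: "(\<lambda>z'. norm (fst \<xi> + M z')) = (\<lambda>z'. HamG B (z', \<xi>))"
    by (simp add: M_def HamG_def)
  have e2: "(\<lambda>h. M h \<bullet> sgn W) = (\<lambda>h. (- (1/(2*norm W)) *\<^sub>R Jmap B (snd \<xi>) W, 0::real^'m) \<bullet> h)"
  proof
    fix h :: "(real^'n) \<times> (real^'m)"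
    have "Jmap B (snd \<xi>) (fst h) \<bullet> W = - (Jmap B (snd \<xi>) W \<bullet> fst h)" by (rule J_skew)
    then show "M h \<bullet> sgn W = (- (1/(2*norm W)) *\<^sub>R Jmap B (snd \<xi>) W, 0::real^'m) \<bullet> h"
      using W0 by (simp add: M_def sgn_div_norm inner_prod_def field_simps)
  qed
  show ?thesis by (rule grad_eqI) (use d e1 e2 in simp)
qed

lemma Fv_formula:
  assumes "wv B p \<noteq> 0"
  shows "Fv B p = (((1/norm (wv B p)) *\<^sub>R wv B p, (1/(2*norm (wv B p))) *\<^sub>R B (fst (fst p)) (wv B p)),
                   ((1/(2*norm (wv B p))) *\<^sub>R Jmap B (snd (snd p)) (wv B p), 0))"
  using grad_eta[of "wv B p" "snd p" "fst p"] grad_z[of "wv B p" "snd p" "fst p"] assms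
  by (simp add: Fv_def wv_def)

end


lemma deriv0_const:
  fixes g :: "real \<Rightarrow> 'a::real_normed_vector"
  assumes "\<And>s. (g has_vector_derivative 0) (at s)"
  shows "g t = g 0"
proof -
  have "\<And>s. s \<in> UNIV \<Longrightarrow> (g has_derivative (\<lambda>h. 0)) (at s within UNIV)"
    using assms by (simp add: has_vector_derivative_def)
  then obtain c where "\<forall>s\<in>UNIV. g s = c" using has_derivative_zero_constant[of UNIV g] by auto
  then show ?thesis by simp
qed

lemma same_deriv_eq:
  fixes g h :: "real \<Rightarrow> 'a::real_normed_vector"
  assumes "\<And>s. (g has_vector_derivative D s) (at s)" "\<And>s. (h has_vector_derivative D s) (at s)"
    and "g 0 = h 0"
  shows "g t = h t"
proof -
  have "\<And>s. ((\<lambda>s. g s - h s) has_vector_derivative 0) (at s)"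
    using has_vector_derivative_diff[OF assms(1) assms(2)] by simp
  then have "g t - h t = g 0 - h 0" using deriv0_const[of "\<lambda>s. g s - h s" t] by simp
  then show ?thesis using assms(3) by simp
qed

lemma antideriv:
  fixes f :: "real \<Rightarrow> 'a::banach"
  assumes cf: "continuous_on UNIV f"
  shows "\<exists>F. F 0 = 0 \<and> (\<forall>t. (F has_vector_derivative f t) (at t))"
proof -
  define F where "F = (\<lambda>u. integral {0..u} f - integral {u..0} f)"
  have "(F has_vector_derivative f x) (at x)" for x
  proof -
    define a where "a = - (\<bar>x\<bar> + 1)"
    define b where "b = \<bar>x\<bar> + 1"
    have ab: "a \<le> 0" "0 \<le> b" "a < x" "x < b" unfolding a_def b_def by auto
    have cab: "continuous_on {a..b} f" using cf continuous_on_subset by blast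
    have int: "f integrable_on {a..b}" using integrable_continuous_real[OF cab] .
    have intsub: "f integrable_on {c..d}" if "a \<le> c" "d \<le> b" for c d
      using integrable_on_subinterval[OF int] that by auto
    have eq: "F u = integral {a..u} f - integral {a..0} f" if "u \<in> {a<..<b}" for u
    proof (cases "0 \<le> u")
      case True
      have "integral {u..0} f = 0"
      proof (cases "u = 0")
        case True then show ?thesis by simp
      next
        case False then have "{u..0} = {}" using \<open>0 \<le> u\<close> by auto
        then show ?thesis by simp
      qed
      moreover have "integral {a..0} f + integral {0..u} f = integral {a..u} f"
        using Henstock_Kurzweil_Integration.integral_combine[OF ab(1) True intsub[of a u]] that by auto
      ultimately show ?thesis unfolding F_def by (simp add: algebra_simps)
    next
      case False
      then have "{0..u} = {}" by auto
      moreover have "integral {a..u} f + integral {u..0} f = integral {a..0} f"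
        using Henstock_Kurzweil_Integration.integral_combine[of a u 0 f] intsub[of a 0] that False ab by auto
      ultimately show ?thesis unfolding F_def by (simp add: algebra_simps)
    qed
    have d1: "((\<lambda>u. integral {a..u} f) has_vector_derivative f x) (at x within {a..b})"
      using integral_has_vector_derivative[OF cab] ab by auto
    then have "((\<lambda>u. integral {a..u} f - integral {a..0} f) has_vector_derivative f x) (at x within {a..b})"
      by (auto intro!: derivative_eq_intros)
    then have "((\<lambda>u. integral {a..u} f - integral {a..0} f) has_vector_derivative f x) (at x within {a<..<b})"
      by (rule has_vector_derivative_within_subset) auto
    then have "((\<lambda>u. integral {a..u} f - integral {a..0} f) has_vector_derivative f x) (at x)"
      using has_vector_derivative_within_open[of x "{a<..<b}"] ab by auto
    then show ?thesis
      by (rule has_vector_derivative_transform_within_open[of _ _ _ "{a<..<b}"]) (use ab eq in auto)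
  qed
  moreover have "F 0 = 0" unfolding F_def by simp
  ultimately show ?thesis by blast
qed



definition sol :: "(real^'n \<Rightarrow> real^'n \<Rightarrow> real^'m) \<Rightarrow> ((real^'n) \<times> (real^'m)) \<Rightarrow> ((real^'n) \<times> (real^'m))
   \<Rightarrow> (real \<Rightarrow> ((real^'n) \<times> (real^'m)) \<times> ((real^'n) \<times> (real^'m))) \<Rightarrow> bool" where
  "sol B y \<xi> \<gamma> \<longleftrightarrow> \<gamma> 0 = (y, \<xi>) \<and> (\<forall>t. (\<gamma> has_vector_derivative Fv B (\<gamma> t)) (at t))"

lemma ham_flow_sol: "ham_flow (HamG B) y \<xi> = (THE \<gamma>. sol B y \<xi> \<gamma>)"
  unfolding ham_flow_def sol_def Fv_def by simp

lemma comp_derivs: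
  assumes "(\<gamma> has_vector_derivative D) (at t)"
  shows "((\<lambda>s. fst (fst (\<gamma> s))) has_vector_derivative fst (fst D)) (at t)"
    and "((\<lambda>s. snd (fst (\<gamma> s))) has_vector_derivative snd (fst D)) (at t)"
    and "((\<lambda>s. fst (snd (\<gamma> s))) has_vector_derivative fst (snd D)) (at t)"
    and "((\<lambda>s. snd (snd (\<gamma> s))) has_vector_derivative snd (snd D)) (at t)"
  using bounded_linear.has_vector_derivative[OF bounded_linear_fst bounded_linear.has_vector_derivative[OF bounded_linear_fst assms]]
    bounded_linear.has_vector_derivative[OF bounded_linear_snd bounded_linear.has_vector_derivative[OF bounded_linear_fst assms]]
    bounded_linear.has_vector_derivative[OF bounded_linear_fst bounded_linear.has_vector_derivative[OF bounded_linear_snd assms]]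
    bounded_linear.has_vector_derivative[OF bounded_linear_snd bounded_linear.has_vector_derivative[OF bounded_linear_snd assms]]
  by auto

context grp begin

lemma wv_deriv:
  assumes "(\<gamma> has_vector_derivative D) (at t)"
  shows "((\<lambda>s. wv B (\<gamma> s)) has_vector_derivative (fst (snd D) + (1/2) *\<^sub>R (Jmap B (snd (snd (\<gamma> t))) (fst (fst D)) + Jmap B (snd (snd D)) (fst (fst (\<gamma> t)))))) (at t)"
proof -
  note c = comp_derivs[OF assms]
  have j: "((\<lambda>s. Jmap B (snd (snd (\<gamma> s))) (fst (fst (\<gamma> s)))) has_vector_derivative (Jmap B (snd (snd (\<gamma> t))) (fst (fst D)) + Jmap B (snd (snd D)) (fst (fst (\<gamma> t))))) (at t)"
    using bounded_bilinear.has_vector_derivative[OF J_bb c(4) c(1)] by simp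
  have j2: "((\<lambda>s. (1/2) *\<^sub>R Jmap B (snd (snd (\<gamma> s))) (fst (fst (\<gamma> s)))) has_vector_derivative (1/2) *\<^sub>R (Jmap B (snd (snd (\<gamma> t))) (fst (fst D)) + Jmap B (snd (snd D)) (fst (fst (\<gamma> t))))) (at t)"
    using bounded_linear.has_vector_derivative[OF bounded_linear_scaleR_right j] .
  show ?thesis unfolding wv_def using has_vector_derivative_add[OF c(3) j2] .
qed

lemma wv_deriv_sol:
  assumes "(\<gamma> has_vector_derivative Fv B (\<gamma> t)) (at t)" "wv B (\<gamma> t) \<noteq> 0"
  shows "((\<lambda>s. wv B (\<gamma> s)) has_vector_derivative (1/norm (wv B (\<gamma> t))) *\<^sub>R Jmap B (snd (snd (\<gamma> t))) (wv B (\<gamma> t))) (at t)"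
  using wv_deriv[OF assms(1)]
proof (rule has_vector_derivative_eq_rhs)
  let ?w = "wv B (\<gamma> t)"
  let ?J = "Jmap B (snd (snd (\<gamma> t)))"
  have "fst (snd (Fv B (\<gamma> t))) + (1/2) *\<^sub>R (?J (fst (fst (Fv B (\<gamma> t)))) + Jmap B (snd (snd (Fv B (\<gamma> t)))) (fst (fst (\<gamma> t))))
      = (1/(2*norm ?w)) *\<^sub>R ?J ?w + (1/2) *\<^sub>R ((1/norm ?w) *\<^sub>R ?J ?w)"
    by (simp add: Fv_formula[OF assms(2)] J_scale_x)
  also have "\<dots> = (1/norm ?w) *\<^sub>R ?J ?w"
    by (simp add: scaleR_scaleR flip: scaleR_add_left)
  finally show "fst (snd (Fv B (\<gamma> t))) + (1/2) *\<^sub>R (?J (fst (fst (Fv B (\<gamma> t)))) + Jmap B (snd (snd (Fv B (\<gamma> t)))) (fst (fst (\<gamma> t))))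
      = (1/norm ?w) *\<^sub>R ?J ?w" .
qed

lemma normsq_deriv:
  assumes "(f has_vector_derivative c *\<^sub>R Jmap B \<mu> (f t)) (at t)"
  shows "((\<lambda>s. f s \<bullet> f s) has_vector_derivative 0) (at t)"
  using bounded_bilinear.has_vector_derivative[OF bounded_bilinear_inner assms assms]
  using J_self[of \<mu> "f t"] by (simp add: inner_commute)


lemma conserve:
  assumes d: "\<forall>t. (\<gamma> has_vector_derivative Fv B (\<gamma> t)) (at t)" and w0: "wv B (\<gamma> 0) \<noteq> 0"
  shows "norm (wv B (\<gamma> t)) = norm (wv B (\<gamma> 0))"
proof -
  define f where "f = (\<lambda>s. wv B (\<gamma> s))"
  define h0 where "h0 = norm (f 0)"
  have h0pos: "h0 > 0" using w0 unfolding h0_def f_def by simp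
  have cont: "isCont f s" for s
    using has_vector_derivative_continuous[OF wv_deriv[OF d[rule_format, of s]]] unfolding f_def by simp
  define S where "S = {s. norm (f s) = h0}"
  have "closed S" unfolding S_def
    by (rule closed_Collect_eq) (auto intro!: continuous_at_imp_continuous_on continuous_intros cont)
  moreover have "open S"
    unfolding open_contains_ball
  proof
    fix s0 assume "s0 \<in> S"
    then have ns0: "norm (f s0) = h0" unfolding S_def by simp
    then have "f s0 \<noteq> 0" using h0pos by auto
    then obtain e where e: "e > 0" "\<forall>y. dist s0 y < e \<longrightarrow> f y \<noteq> 0"
      using continuous_at_avoid[OF cont[of s0]] by blast
    have "\<And>y. y \<in> ball s0 e \<Longrightarrow> ((\<lambda>s. f s \<bullet> f s) has_derivative (\<lambda>h. 0)) (at y within ball s0 e)"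
    proof -
      fix y assume "y \<in> ball s0 e"
      then have "f y \<noteq> 0" using e by auto
      then have "((\<lambda>s. f s \<bullet> f s) has_vector_derivative 0) (at y)"
        using normsq_deriv wv_deriv_sol[OF d[rule_format, of y]] unfolding f_def by blast
      then show "((\<lambda>s. f s \<bullet> f s) has_derivative (\<lambda>h. 0)) (at y within ball s0 e)"
        by (simp add: has_vector_derivative_def has_derivative_at_withinI)
    qed
    then obtain c where c: "\<forall>y\<in>ball s0 e. f y \<bullet> f y = c"
      using has_derivative_zero_constant[of "ball s0 e" "\<lambda>s. f s \<bullet> f s"] by auto
    have "ball s0 e \<subseteq> S"
    proof
      fix y assume y: "y \<in> ball s0 e"
      then have "f y \<bullet> f y = f s0 \<bullet> f s0" using c e by (metis centre_in_ball)
      then have "norm (f y) = norm (f s0)" by (simp add: norm_eq_sqrt_inner)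
      then show "y \<in> S" using ns0 unfolding S_def by simp
    qed
    then show "\<exists>e>0. ball s0 e \<subseteq> S" using e by blast
  qed
  moreover have "0 \<in> S" unfolding S_def h0_def by simp
  ultimately have "S = UNIV" using clopen[of S] by blast
  then show ?thesis unfolding S_def h0_def f_def by auto
qed

lemma sol_props:
  assumes s: "sol B y \<xi> \<gamma>" and w0: "wv B (y, \<xi>) \<noteq> 0"
  shows "norm (wv B (\<gamma> t)) = norm (wv B (y, \<xi>))"
    and "snd (snd (\<gamma> t)) = snd \<xi>"
    and "((\<lambda>s. wv B (\<gamma> s)) has_vector_derivative (1/norm (wv B (y, \<xi>))) *\<^sub>R Jmap B (snd \<xi>) (wv B (\<gamma> t))) (at t)"
    and "((\<lambda>s. fst (fst (\<gamma> s))) has_vector_derivative (1/norm (wv B (y, \<xi>))) *\<^sub>R wv B (\<gamma> t)) (at t)"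
    and "((\<lambda>s. snd (fst (\<gamma> s))) has_vector_derivative (1/(2*norm (wv B (y, \<xi>)))) *\<^sub>R B (fst (fst (\<gamma> t))) (wv B (\<gamma> t))) (at t)"
    and "fst (snd (\<gamma> t)) = wv B (\<gamma> t) - (1/2) *\<^sub>R Jmap B (snd \<xi>) (fst (fst (\<gamma> t)))"
proof -
  have d: "\<forall>t. (\<gamma> has_vector_derivative Fv B (\<gamma> t)) (at t)" and g0: "\<gamma> 0 = (y, \<xi>)"
    using s unfolding sol_def by auto
  have n: "norm (wv B (\<gamma> t)) = norm (wv B (y, \<xi>))" for t
    using conserve[OF d] w0 g0 by simp
  then show "norm (wv B (\<gamma> t)) = norm (wv B (y, \<xi>))" .
  have nz: "wv B (\<gamma> t) \<noteq> 0" for t using n[of t] w0 by auto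
  have m: "snd (snd (\<gamma> t)) = snd \<xi>" for t
  proof -
    have "((\<lambda>s. snd (snd (\<gamma> s))) has_vector_derivative 0) (at s)" for s
      using comp_derivs(4)[OF d[rule_format, of s]] Fv_formula[OF nz[of s]] by simp
    then have "snd (snd (\<gamma> t)) = snd (snd (\<gamma> 0))" by (rule deriv0_const)
    then show ?thesis using g0 by simp
  qed
  then show "snd (snd (\<gamma> t)) = snd \<xi>" .
  show "((\<lambda>s. wv B (\<gamma> s)) has_vector_derivative (1/norm (wv B (y, \<xi>))) *\<^sub>R Jmap B (snd \<xi>) (wv B (\<gamma> t))) (at t)"
    using wv_deriv_sol[OF d[rule_format, of t] nz[of t]] n[of t] m[of t] by simp
  show "((\<lambda>s. fst (fst (\<gamma> s))) has_vector_derivative (1/norm (wv B (y, \<xi>))) *\<^sub>R wv B (\<gamma> t)) (at t)"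
    using comp_derivs(1)[OF d[rule_format, of t]] Fv_formula[OF nz[of t]] n[of t] by simp
  show "((\<lambda>s. snd (fst (\<gamma> s))) has_vector_derivative (1/(2*norm (wv B (y, \<xi>)))) *\<^sub>R B (fst (fst (\<gamma> t))) (wv B (\<gamma> t))) (at t)"
    using comp_derivs(2)[OF d[rule_format, of t]] Fv_formula[OF nz[of t]] n[of t] by simp
  show "fst (snd (\<gamma> t)) = wv B (\<gamma> t) - (1/2) *\<^sub>R Jmap B (snd \<xi>) (fst (fst (\<gamma> t)))"
    using m[of t] by (simp add: wv_def)
qed

lemma sol_unique:
  assumes s1: "sol B y \<xi> \<gamma>" and s2: "sol B y \<xi> \<delta>" and w0: "wv B (y, \<xi>) \<noteq> 0"
  shows "\<gamma> = \<delta>"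
proof
  fix t
  define c where "c = 1/norm (wv B (y, \<xi>))"
  define J where "J = Jmap B (snd \<xi>)"
  have g0: "\<gamma> 0 = (y, \<xi>)" "\<delta> 0 = (y, \<xi>)" using s1 s2 unfolding sol_def by auto
  note p1 = sol_props[OF s1 w0] and p2 = sol_props[OF s2 w0]
  define V where "V = (\<lambda>s. wv B (\<gamma> s) - wv B (\<delta> s))"
  have dV: "(V has_vector_derivative c *\<^sub>R J (V s)) (at s)" for s
    unfolding V_def using has_vector_derivative_diff[OF p1(3)[of s] p2(3)[of s]]
    by (simp add: c_def J_def J_diff_x scaleR_diff_right)
  have "V s \<bullet> V s = V 0 \<bullet> V 0" for s
    using normsq_deriv[OF dV[unfolded J_def]] deriv0_const[of "\<lambda>s. V s \<bullet> V s" s] by blast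
  moreover have "V 0 = 0" unfolding V_def using g0 by simp
  ultimately have W: "wv B (\<gamma> s) = wv B (\<delta> s)" for s unfolding V_def by simp
  have X1: "fst (fst (\<gamma> s)) = fst (fst (\<delta> s))" for s
    by (rule same_deriv_eq[OF p1(4)]) (use p2(4) W g0 in simp_all)
  have X2: "snd (fst (\<gamma> s)) = snd (fst (\<delta> s))" for s
    by (rule same_deriv_eq[OF p1(5)]) (use p2(5) W X1 g0 in simp_all)
  have P1: "fst (snd (\<gamma> t)) = fst (snd (\<delta> t))" using p1(6)[of t] p2(6)[of t] W X1 by simp
  have M: "snd (snd (\<gamma> t)) = snd (snd (\<delta> t))" using p1(2)[of t] p2(2)[of t] by simp
  show "\<gamma> t = \<delta> t" using X1[of t] X2[of t] P1 M by (simp add: prod_eq_iff)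
qed

end


context grp begin

lemma sol_exists:
  assumes wnz: "wv B (y, \<xi>) \<noteq> 0"
  shows "\<exists>\<gamma>. sol B y \<xi> \<gamma>"
proof -
  define h0 where "h0 = norm (wv B (y, \<xi>))"
  define \<mu>0 where "\<mu>0 = snd \<xi>"
  define w0 where "w0 = wv B (y, \<xi>)"
  have h0pos: "h0 > 0" using wnz unfolding h0_def by simp
  have linJ: "linear (\<lambda>v. (1/h0) *\<^sub>R Jmap B \<mu>0 v)"
    by (rule linearI) (simp_all add: J_add_x J_scale_x algebra_simps)
  have bl: "bounded_linear (\<lambda>v. (1/h0) *\<^sub>R Jmap B \<mu>0 v)"
    using linJ linear_conv_bounded_linear by blast
  define A :: "(real^'n) endo" where "A = Abs_endo (Blinfun (\<lambda>v. (1/h0) *\<^sub>R Jmap B \<mu>0 v))"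
  have RA: "blinfun_apply (Rep_endo A) v = (1/h0) *\<^sub>R Jmap B \<mu>0 v" for v
    by (simp add: A_def Abs_endo_inverse bounded_linear_Blinfun_apply[OF bl])
  define \<Phi> where "\<Phi> = (\<lambda>e::(real^'n) endo. blinfun_apply (Rep_endo e) w0)"
  have bl\<Phi>: "bounded_linear \<Phi>"
  proof (rule bounded_linear_intro[where K="norm w0"])
    fix a b :: "(real^'n) endo" and r :: real
    show "\<Phi> (a + b) = \<Phi> a + \<Phi> b" by (simp add: \<Phi>_def plus_endo.rep_eq blinfun.add_left)
    show "\<Phi> (r *\<^sub>R a) = r *\<^sub>R \<Phi> a" by (simp add: \<Phi>_def scaleR_endo.rep_eq blinfun.scaleR_left)
    show "norm (\<Phi> a) \<le> norm a * norm w0"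
      using norm_blinfun[of "Rep_endo a" w0] by (simp add: \<Phi>_def norm_endo.rep_eq)
  qed
  define W where "W = (\<lambda>t. \<Phi> (exp (t *\<^sub>R A)))"
  have dW: "(W has_vector_derivative (1/h0) *\<^sub>R Jmap B \<mu>0 (W t)) (at t)" for t
    using bounded_linear.has_vector_derivative[OF bl\<Phi> exp_scaleR_has_vector_derivative_left[of A t]]
    by (simp add: W_def \<Phi>_def times_endo.rep_eq RA)
  have W0: "W 0 = w0" by (simp add: W_def \<Phi>_def one_endo.rep_eq)
  have nW: "norm (W t) = h0" for t
  proof -
    have "W t \<bullet> W t = W 0 \<bullet> W 0"
      using normsq_deriv[OF dW] deriv0_const[of "\<lambda>s. W s \<bullet> W s" t] by blast
    then show ?thesis using W0 by (simp add: norm_eq_sqrt_inner h0_def w0_def)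
  qed
  have cW: "continuous_on UNIV W"
    using dW by (auto intro!: continuous_at_imp_continuous_on has_vector_derivative_continuous)
  obtain F1 where F1: "F1 0 = 0" "\<forall>t. (F1 has_vector_derivative (1/h0) *\<^sub>R W t) (at t)"
  proof -
    have "continuous_on UNIV (\<lambda>t. (1/h0) *\<^sub>R W t)" using cW by (intro continuous_intros)
    then show ?thesis using antideriv[of "\<lambda>t. (1/h0) *\<^sub>R W t"] that by blast
  qed
  define X1 where "X1 = (\<lambda>t. fst y + F1 t)"
  have dX1: "(X1 has_vector_derivative (1/h0) *\<^sub>R W t) (at t)" for t
    unfolding X1_def using has_vector_derivative_add[OF has_vector_derivative_const F1(2)[rule_format, of t]] by simp
  have cX1: "continuous_on UNIV X1"
    using dX1 by (auto intro!: continuous_at_imp_continuous_on has_vector_derivative_continuous)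
  have cB: "continuous_on UNIV (\<lambda>t. (1/(2*h0)) *\<^sub>R B (X1 t) (W t))"
    by (intro continuous_intros bounded_bilinear.continuous_on[OF B_bb] cX1 cW)
  obtain F2 where F2: "F2 0 = 0" "\<forall>t. (F2 has_vector_derivative (1/(2*h0)) *\<^sub>R B (X1 t) (W t)) (at t)"
    using antideriv[OF cB] by auto
  define X2 where "X2 = (\<lambda>t. snd y + F2 t)"
  have dX2: "(X2 has_vector_derivative (1/(2*h0)) *\<^sub>R B (X1 t) (W t)) (at t)" for t
    unfolding X2_def using has_vector_derivative_add[OF has_vector_derivative_const F2(2)[rule_format, of t]] by simp
  define P1 where "P1 = (\<lambda>t. W t - (1/2) *\<^sub>R Jmap B \<mu>0 (X1 t))"
  have blJ: "bounded_linear (\<lambda>v. (1/2) *\<^sub>R Jmap B \<mu>0 v)"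
  proof -
    have "linear (\<lambda>v. (1/2) *\<^sub>R Jmap B \<mu>0 v)"
      by (rule linearI) (simp_all add: J_add_x J_scale_x algebra_simps)
    then show ?thesis using linear_conv_bounded_linear by blast
  qed
  have dP1: "(P1 has_vector_derivative (1/h0) *\<^sub>R Jmap B \<mu>0 (W t) - (1/2) *\<^sub>R Jmap B \<mu>0 ((1/h0) *\<^sub>R W t)) (at t)" for t
    unfolding P1_def using has_vector_derivative_diff[OF dW bounded_linear.has_vector_derivative[OF blJ dX1]] .
  define \<gamma> where "\<gamma> = (\<lambda>t. ((X1 t, X2 t), (P1 t, \<mu>0)))"
  have wg: "wv B (\<gamma> t) = W t" for t by (simp add: \<gamma>_def wv_def P1_def)
  have nz: "wv B (\<gamma> t) \<noteq> 0" for t using wg nW h0pos by (metis norm_zero less_irrefl)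
  have "(\<gamma> has_vector_derivative Fv B (\<gamma> t)) (at t)" for t
  proof -
    have "(\<gamma> has_vector_derivative (((1/h0) *\<^sub>R W t, (1/(2*h0)) *\<^sub>R B (X1 t) (W t)),
          ((1/h0) *\<^sub>R Jmap B \<mu>0 (W t) - (1/2) *\<^sub>R Jmap B \<mu>0 ((1/h0) *\<^sub>R W t), 0))) (at t)"
      unfolding \<gamma>_def by (intro has_vector_derivative_Pair dX1 dX2 dP1 has_vector_derivative_const)
    then show ?thesis
    proof (rule has_vector_derivative_eq_rhs)
      have e: "(1/h0) *\<^sub>R Jmap B \<mu>0 (W t) - (1/2) *\<^sub>R Jmap B \<mu>0 ((1/h0) *\<^sub>R W t) = (1/(2*h0)) *\<^sub>R Jmap B \<mu>0 (W t)"
        by (simp add: J_scale_x scaleR_scaleR flip: scaleR_diff_left)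
      show "(((1/h0) *\<^sub>R W t, (1/(2*h0)) *\<^sub>R B (X1 t) (W t)),
          ((1/h0) *\<^sub>R Jmap B \<mu>0 (W t) - (1/2) *\<^sub>R Jmap B \<mu>0 ((1/h0) *\<^sub>R W t), 0)) = Fv B (\<gamma> t)"
        using e by (simp add: Fv_formula[OF nz] wg nW) (simp add: \<gamma>_def)
    qed
  qed
  moreover have "\<gamma> 0 = (y, \<xi>)"
    using W0 F1(1) F2(1) by (simp add: \<gamma>_def X1_def X2_def P1_def w0_def wv_def \<mu>0_def)
  ultimately show ?thesis unfolding sol_def by blast
qed

end


context grp begin

lemma flow_eq:
  assumes "wv B (y, \<xi>) \<noteq> 0" "sol B y \<xi> \<gamma>"
  shows "ham_flow (HamG B) y \<xi> = \<gamma>"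
  unfolding ham_flow_sol
  by (rule the_equality) (use assms sol_unique in blast)+

lemma inj_barl: "inj (barl B y)"
proof (rule injI)
  fix a b assume "barl B y a = barl B y b"
  then have "(fst a - (1/2) *\<^sub>R Jmap B (snd a) (fst y), snd a) = (fst b - (1/2) *\<^sub>R Jmap B (snd b) (fst y), snd b)"
    unfolding barl_def .
  then have "snd a = snd b" "fst a - (1/2) *\<^sub>R Jmap B (snd a) (fst y) = fst b - (1/2) *\<^sub>R Jmap B (snd b) (fst y)"
    by (metis prod.inject)+
  then have "fst a = fst b" by (metis diff_add_cancel)
  with \<open>snd a = snd b\<close> show "a = b" by (simp add: prod_eq_iff)
qed

lemma inj_lmap: "inj (lmap B y)"
proof (rule injI)
  fix a b assume "lmap B y a = lmap B y b"
  then have "(fst y + fst a, snd y + snd a + (1/2) *\<^sub>R B (fst y) (fst a)) = (fst y + fst b, snd y + snd b + (1/2) *\<^sub>R B (fst y) (fst b))"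
    unfolding lmap_def gmult_def .
  then have "fst a = fst b" "snd y + snd a + (1/2) *\<^sub>R B (fst y) (fst a) = snd y + snd b + (1/2) *\<^sub>R B (fst y) (fst b)"
    by (metis prod.inject add_left_cancel)+
  then have "snd a = snd b" by (metis add_right_cancel add_left_cancel add.assoc)
  with \<open>fst a = fst b\<close> show "a = b" by (simp add: prod_eq_iff)
qed

lemma lmap_inv: "inv (lmap B y) x = (fst x - fst y, snd x - snd y - (1/2) *\<^sub>R B (fst y) (fst x))"
proof (rule inv_f_eq[OF inj_lmap])
  have "B (fst y) (fst x - fst y) = B (fst y) (fst x)"
    using bounded_bilinear.diff_right[OF B_bb] B_same by simp
  then show "lmap B y (fst x - fst y, snd x - snd y - (1/2) *\<^sub>R B (fst y) (fst x)) = x"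
    by (simp add: lmap_def gmult_def prod_eq_iff)
qed

lemma phase_eq:
  assumes "snd Q = \<mu>"
  shows "(x - gmult B y P) \<bullet> barl B y Q = ((fst x - fst y, snd x - snd y - (1/2) *\<^sub>R B (fst y) (fst x)) - P) \<bullet> Q"
proof -
  define a where "a = fst x - fst y - fst P"
  have "Jmap B \<mu> (fst y) \<bullet> a = \<mu> \<bullet> B (fst y) (fst x) - \<mu> \<bullet> B (fst y) (fst P)"
    unfolding a_def J_inner using B_same
    by (simp add: bounded_bilinear.diff_right[OF B_bb] inner_diff_right)
  then have j: "a \<bullet> Jmap B \<mu> (fst y) = \<mu> \<bullet> B (fst y) (fst x) - \<mu> \<bullet> B (fst y) (fst P)"
    by (simp add: inner_commute)
  have "(x - gmult B y P) \<bullet> barl B y Q = a \<bullet> fst Q - (1/2) * (a \<bullet> Jmap B \<mu> (fst y))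
       + (snd x - snd y - snd P) \<bullet> \<mu> - (1/2) * (B (fst y) (fst P) \<bullet> \<mu>)"
    using assms by (simp add: gmult_def barl_def inner_prod_def a_def inner_diff_left inner_diff_right algebra_simps)
  also have "\<dots> = a \<bullet> fst Q + (snd x - snd y - snd P) \<bullet> \<mu> - (1/2) * (B (fst y) (fst x) \<bullet> \<mu>)"
    using j by (simp add: inner_commute algebra_simps)
  also have "\<dots> = ((fst x - fst y, snd x - snd y - (1/2) *\<^sub>R B (fst y) (fst x)) - P) \<bullet> Q"
    using assms by (simp add: inner_prod_def a_def inner_diff_left inner_diff_right algebra_simps)
  finally show ?thesis .
qed

end


context grp begin

lemma transport:
  assumes s0: "sol B 0 \<xi>' \<Gamma>0" and wnz: "wv B (0, \<xi>') \<noteq> 0"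
  shows "sol B y (barl B y \<xi>') (\<lambda>t. (gmult B y (fst (\<Gamma>0 t)), barl B y (snd (\<Gamma>0 t))))"
proof -
  note p = sol_props[OF s0 wnz]
  define h where "h = norm (wv B (0, \<xi>'))"
  define \<mu> where "\<mu> = snd \<xi>'"
  define y1 where "y1 = fst y"
  define X1 where "X1 = (\<lambda>t. fst (fst (\<Gamma>0 t)))"
  define X2 where "X2 = (\<lambda>t. snd (fst (\<Gamma>0 t)))"
  define Wt where "Wt = (\<lambda>t. wv B (\<Gamma>0 t))"
  have hpos: "h > 0" using wnz unfolding h_def by simp
  have form: "(\<lambda>t. (gmult B y (fst (\<Gamma>0 t)), barl B y (snd (\<Gamma>0 t)))) =
     (\<lambda>t. ((y1 + X1 t, snd y + X2 t + (1/2) *\<^sub>R B y1 (X1 t)),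
           (Wt t - (1/2) *\<^sub>R Jmap B \<mu> (X1 t) - (1/2) *\<^sub>R Jmap B \<mu> y1, \<mu>)))"
  proof
    fix t
    show "(gmult B y (fst (\<Gamma>0 t)), barl B y (snd (\<Gamma>0 t))) =
     ((y1 + X1 t, snd y + X2 t + (1/2) *\<^sub>R B y1 (X1 t)),
           (Wt t - (1/2) *\<^sub>R Jmap B \<mu> (X1 t) - (1/2) *\<^sub>R Jmap B \<mu> y1, \<mu>))"
      using p(2)[of t] p(6)[of t]
      by (simp add: gmult_def barl_def y1_def X1_def X2_def Wt_def \<mu>_def)
  qed
  define \<Gamma> where "\<Gamma> = (\<lambda>t. ((y1 + X1 t, snd y + X2 t + (1/2) *\<^sub>R B y1 (X1 t)),
           (Wt t - (1/2) *\<^sub>R Jmap B \<mu> (X1 t) - (1/2) *\<^sub>R Jmap B \<mu> y1, \<mu>)))"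
  have wG: "wv B (\<Gamma> t) = Wt t" for t
    by (simp add: \<Gamma>_def wv_def J_add_x algebra_simps)
  have nW: "norm (Wt t) = h" for t using p(1)[of t] unfolding Wt_def h_def .
  have nz: "wv B (\<Gamma> t) \<noteq> 0" for t using wG nW hpos by (metis norm_zero less_irrefl)
  have dX1: "(X1 has_vector_derivative (1/h) *\<^sub>R Wt t) (at t)" for t
    using p(4)[of t] unfolding X1_def Wt_def h_def .
  have dX2: "(X2 has_vector_derivative (1/(2*h)) *\<^sub>R B (X1 t) (Wt t)) (at t)" for t
    using p(5)[of t] unfolding X1_def X2_def Wt_def h_def .
  have dW: "(Wt has_vector_derivative (1/h) *\<^sub>R Jmap B \<mu> (Wt t)) (at t)" for t
    using p(3)[of t] unfolding Wt_def h_def \<mu>_def .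
  have blB: "bounded_linear (\<lambda>v. (1/2) *\<^sub>R B y1 v)"
    by (intro bounded_linear_compose[OF bounded_linear_scaleR_right] bounded_bilinear.bounded_linear_right[OF B_bb])
  have blJ: "bounded_linear (\<lambda>v. (1/2) *\<^sub>R Jmap B \<mu> v)"
  proof -
    have "linear (\<lambda>v. (1/2) *\<^sub>R Jmap B \<mu> v)"
      by (rule linearI) (simp_all add: J_add_x J_scale_x algebra_simps)
    then show ?thesis using linear_conv_bounded_linear by blast
  qed
  have "(\<Gamma> has_vector_derivative Fv B (\<Gamma> t)) (at t)" for t
  proof -
    have "(\<Gamma> has_vector_derivative
       ((0 + (1/h) *\<^sub>R Wt t, 0 + (1/(2*h)) *\<^sub>R B (X1 t) (Wt t) + (1/2) *\<^sub>R B y1 ((1/h) *\<^sub>R Wt t)),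
        ((1/h) *\<^sub>R Jmap B \<mu> (Wt t) - (1/2) *\<^sub>R Jmap B \<mu> ((1/h) *\<^sub>R Wt t) - 0, 0))) (at t)"
      unfolding \<Gamma>_def
      by (intro has_vector_derivative_Pair has_vector_derivative_add has_vector_derivative_diff
          has_vector_derivative_const dX1 dX2 dW bounded_linear.has_vector_derivative[OF blB dX1]
          bounded_linear.has_vector_derivative[OF blJ dX1])
    then show ?thesis
    proof (rule has_vector_derivative_eq_rhs)
      have e1: "(1/h) *\<^sub>R Jmap B \<mu> (Wt t) - (1/2) *\<^sub>R Jmap B \<mu> ((1/h) *\<^sub>R Wt t) = (1/(2*h)) *\<^sub>R Jmap B \<mu> (Wt t)"
        by (simp add: J_scale_x scaleR_scaleR flip: scaleR_diff_left)
      have e2: "(1/(2*h)) *\<^sub>R B (X1 t) (Wt t) + (1/2) *\<^sub>R B y1 ((1/h) *\<^sub>R Wt t) = (1/(2*h)) *\<^sub>R B (y1 + X1 t) (Wt t)"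
        by (simp add: bounded_bilinear.add_left[OF B_bb] bounded_bilinear.scaleR_right[OF B_bb] scaleR_scaleR algebra_simps)
      show "((0 + (1/h) *\<^sub>R Wt t, 0 + (1/(2*h)) *\<^sub>R B (X1 t) (Wt t) + (1/2) *\<^sub>R B y1 ((1/h) *\<^sub>R Wt t)),
        ((1/h) *\<^sub>R Jmap B \<mu> (Wt t) - (1/2) *\<^sub>R Jmap B \<mu> ((1/h) *\<^sub>R Wt t) - 0, 0)) = Fv B (\<Gamma> t)"
        unfolding Fv_formula[OF nz] wG nW using e1 e2 by (simp add: \<Gamma>_def)
    qed
  qed
  moreover have "\<Gamma> 0 = (y, barl B y \<xi>')"
  proof -
    have g0: "\<Gamma>0 0 = (0, \<xi>')" using s0 unfolding sol_def by simp
    have "\<Gamma> 0 = (gmult B y (fst (\<Gamma>0 0)), barl B y (snd (\<Gamma>0 0)))" using form unfolding \<Gamma>_def by metis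
    also have "\<dots> = (y, barl B y \<xi>')" using g0 by (simp add: gmult_def bounded_bilinear.zero_right[OF B_bb])
    finally show ?thesis .
  qed
  ultimately have "sol B y (barl B y \<xi>') \<Gamma>" unfolding sol_def by blast
  then show ?thesis using form unfolding \<Gamma>_def by simp
qed

end

theorem proposition9p5:
  fixes B :: "real^'n \<Rightarrow> real^'n \<Rightarrow> real^'m"
    and t :: real and x y \<xi> :: "(real^'n) \<times> (real^'m)"
  assumes "bilinear B"
    and "\<forall>a b. B a b = - B b a"
    and "span (range (\<lambda>(a, b). B a b)) = UNIV"
    and "(y, \<xi>) \<in> Xi B"
  shows "phistar B t x y \<xi> = phi B t (inv (lmap B y) x) (inv (barl B y) \<xi>)"
proof -
  interpret grp B using assms(1,2) by unfold_locales
  obtain \<xi>0 \<mu> where xi: "\<xi> = barl B y (\<xi>0, \<mu>)" "\<xi>0 \<noteq> 0"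
    using assms(4) unfolding Xi_def by auto
  define \<xi>' where "\<xi>' = (\<xi>0, \<mu>)"
  have ib: "inv (barl B y) \<xi> = \<xi>'" unfolding xi(1) \<xi>'_def by (rule inv_f_f[OF inj_barl])
  have w0: "wv B (0, \<xi>') \<noteq> 0" using xi(2) by (simp add: wv_def \<xi>'_def)
  obtain \<Gamma>0 where s0: "sol B 0 \<xi>' \<Gamma>0" using sol_exists[OF w0] by blast
  have f0: "ham_flow (HamG B) 0 \<xi>' = \<Gamma>0" by (rule flow_eq[OF w0 s0])
  have wy: "wv B (y, \<xi>) \<noteq> 0"
    using xi(2) by (simp add: wv_def xi(1) barl_def)
  have f1: "ham_flow (HamG B) y \<xi> = (\<lambda>t. (gmult B y (fst (\<Gamma>0 t)), barl B y (snd (\<Gamma>0 t))))"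
    using flow_eq[OF wy] transport[OF s0 w0, of y] xi(1) \<xi>'_def by simp
  have m: "snd (snd (\<Gamma>0 t)) = \<mu>" using sol_props(2)[OF s0 w0, of t] by (simp add: \<xi>'_def)
  have sx: "snd \<xi> = \<mu>" by (simp add: xi(1) barl_def)
  define P where "P = fst (\<Gamma>0 t)"
  define Q where "Q = snd (\<Gamma>0 t)"
  define x' where "x' = inv (lmap B y) x"
  have R: "(x - gmult B y P) \<bullet> barl B y Q = (x' - P) \<bullet> Q"
    using phase_eq[OF m, of x y P] unfolding x'_def lmap_inv Q_def by simp
  have I: "fst x - fst (gmult B y P) = fst x' - fst P"
    unfolding x'_def lmap_inv by (simp add: gmult_def)
  have L: "phistar B t x y \<xi> = complex_of_real ((x - gmult B y P) \<bullet> barl B y Q)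
     + (\<i> / 4) * complex_of_real (absJ B \<mu> (fst x - fst (gmult B y P)) \<bullet> (fst x - fst (gmult B y P)))"
    by (simp add: phistar_def xstar_def xistar_def f1 sx P_def Q_def)
  have Rh: "phi B t x' \<xi>' = complex_of_real ((x' - P) \<bullet> Q)
     + (\<i> / 4) * complex_of_real (absJ B \<mu> (fst x' - fst P) \<bullet> (fst x' - fst P))"
    using f0 by (simp add: phi_def xstar_def xistar_def P_def Q_def \<xi>'_def)
  show ?thesis unfolding ib x'_def[symmetric] L Rh R I ..
qed

end
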